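(* Let $(M,\pi)$ be a partial $H$-module with standard dilation $((\overline M,T_\pi),\varphi)$. The following are equivalent: (i) $\pi:H\to\mathrm{End}_k(M)$ is a morphism of algebras, i.e. $M$ is a (global) $H$-module; (ii) there is a morphism of partial $H$-modules $\overline\varphi:\overline M\to M$ with $\varphi\circ\overline\varphi=\mathrm{id}_{\overline M}$, where $\overline M$ is regarded as a partial $H$-module via its global $H$-action; (iii) $\varphi:M\to\overline M$ is bijective. In this case $\varphi:M\to\overline M$ is an isomorphism of $H$-modules and $T_\pi=\mathrm{id}_{\overline M}$.
   Context: Throughout, $k$ is a field and $H$ is a Hopf algebra over $k$ with bijective antipode $S$ and Sweedler notation $\Delta(h)=h_{(1)}\otimes h_{(2)}$. A partial $H$-module is a vector space $M$ with linear $\pi:H\to\mathrm{End}_k(M)$ satisfying, for all $h,k\in H$: - $\pi(1_H)=\mathrm{id}$; - $\pi(h)\pi(k_{(1)})\pi(S(k_{(2)}))=\pi(hk_{(1)})\pi(S(k_{(2)}))$; - $\pi(h_{(1)})\pi(S(h_{(2)}))\pi(k)=\pi(h_{(1)})\pi(S(h_{(2)})k)$; - $\pi(h)\pi(S(k_{(1)}))\pi(k_{(2)})=\pi(hS(k_{(1)}))\pi(k_{(2)})$; - $\pi(S(h_{(1)}))\pi(h_{(2)})\pi(k)=\pi(S(h_{(1)}))\pi(h_{(2)}k)$. Morphisms are linear maps commuting with all $\pi(h)$. A left $H$-module (action $\triangleright$) is regarded as a partial $H$-module via $\pi(h)(m)=h\triangleright m$. Standard dilation: $\operatorname{Hom}_k(H,M)$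 is a left $H$-module via $(h\triangleright f)(k)=f(kh)$. Set $\varphi(m)(h)=\pi(h)(m)$, $\overline M=H\triangleright\varphi(M)$ (the $H$-submodule generated by $\varphi(M)$), and $T_\pi:\overline M\to\overline M$, $T_\pi(f)=\varphi(f(1_H))$. *)

theory Defs
  imports Complex_Main
begin

text \<open>
The Hopf algebra H is a
type 'h of class ring_1 (its algebra multiplication and unit) together with a scalar
multiplication sc making it a k-vector space (Main's locale vector_space) compatible with
the multiplication.  Elements of H tensor H are represented by finite lists of pairs
(a list [(a1,b1),...,(an,bn)] stands for the sum of the ai tensor bi); the comultiplication
is a function Delta :: 'h => ('h * 'h) list (Sweedler notation: h(1) tensor h(2) is the list
Delta h).  Equality in H tensor H (resp. H tensor H tensor H) is tested against all pairs
(triples) of linear functionals H -> k, which is faithful for vector spaces over a field.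
\<close>

definition tensor2_eq :: "('k::field \<Rightarrow> 'h::ab_group_add \<Rightarrow> 'h) \<Rightarrow> ('h \<times> 'h) list \<Rightarrow> ('h \<times> 'h) list \<Rightarrow> bool" where
  "tensor2_eq sc xs ys \<longleftrightarrow>
     (\<forall>f g. Vector_Spaces.linear sc (*) f \<and> Vector_Spaces.linear sc (*) g \<longrightarrow>
        sum_list (map (\<lambda>(a,b). f a * g b) xs) = sum_list (map (\<lambda>(a,b). f a * g b) ys))"

definition tensor3_eq :: "('k::field \<Rightarrow> 'h::ab_group_add \<Rightarrow> 'h) \<Rightarrow> ('h \<times> 'h \<times> 'h) list \<Rightarrow> ('h \<times> 'h \<times> 'h) list \<Rightarrow> bool" where
  "tensor3_eq sc xs ys \<longleftrightarrow>
     (\<forall>f g l. Vector_Spaces.linear sc (*) f \<and> Vector_Spaces.linear sc (*) g \<and> Vector_Spaces.linear sc (*) l \<longrightarrow>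
        sum_list (map (\<lambda>(a,b,c). f a * g b * l c) xs) = sum_list (map (\<lambda>(a,b,c). f a * g b * l c) ys))"

definition hopf_algebra ::
  "('k::field \<Rightarrow> 'h::ring_1 \<Rightarrow> 'h) \<Rightarrow> ('h \<Rightarrow> ('h \<times> 'h) list) \<Rightarrow> ('h \<Rightarrow> 'k) \<Rightarrow> ('h \<Rightarrow> 'h) \<Rightarrow> bool" where
  "hopf_algebra sc Delta eps S \<longleftrightarrow>
     vector_space sc
   \<and> (\<forall>c a b. sc c (a * b) = sc c a * b \<and> sc c (a * b) = a * sc c b)
   \<comment> \<open>Delta is linear\<close>
   \<and> (\<forall>a b. tensor2_eq sc (Delta (a + b)) (Delta a @ Delta b))
   \<and> (\<forall>c a. tensor2_eq sc (Delta (sc c a)) (map (\<lambda>(x,y). (sc c x, y)) (Delta a)))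
   \<comment> \<open>coassociativity\<close>
   \<and> (\<forall>h. tensor3_eq sc
          (concat (map (\<lambda>(a,b). map (\<lambda>(x,y). (x,y,b)) (Delta a)) (Delta h)))
          (concat (map (\<lambda>(a,b). map (\<lambda>(x,y). (a,x,y)) (Delta b)) (Delta h))))
   \<comment> \<open>counit\<close>
   \<and> Vector_Spaces.linear sc (*) eps
   \<and> (\<forall>h. sum_list (map (\<lambda>(a,b). sc (eps a) b) (Delta h)) = h)
   \<and> (\<forall>h. sum_list (map (\<lambda>(a,b). sc (eps b) a) (Delta h)) = h)
   \<comment> \<open>Delta and eps are algebra maps\<close>
   \<and> (\<forall>a b. tensor2_eq sc (Delta (a * b))
          (concat (map (\<lambda>(x,y). map (\<lambda>(u,v). (x * u, y * v)) (Delta b)) (Delta a))))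
   \<and> tensor2_eq sc (Delta 1) [(1, 1)]
   \<and> (\<forall>a b. eps (a * b) = eps a * eps b) \<and> eps 1 = 1
   \<comment> \<open>antipode\<close>
   \<and> Vector_Spaces.linear sc sc S
   \<and> (\<forall>h. sum_list (map (\<lambda>(a,b). S a * b) (Delta h)) = sc (eps h) 1)
   \<and> (\<forall>h. sum_list (map (\<lambda>(a,b). a * S b) (Delta h)) = sc (eps h) 1)"

definition partial_module ::
  "('k::field \<Rightarrow> 'h::ring_1 \<Rightarrow> 'h) \<Rightarrow> ('h \<Rightarrow> ('h \<times> 'h) list) \<Rightarrow> ('h \<Rightarrow> 'h)
   \<Rightarrow> ('k \<Rightarrow> 'm::ab_group_add \<Rightarrow> 'm) \<Rightarrow> ('h \<Rightarrow> 'm \<Rightarrow> 'm) \<Rightarrow> bool" where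
  "partial_module sc Delta S scM \<rho> \<longleftrightarrow>
     vector_space scM
   \<and> (\<forall>h. Vector_Spaces.linear scM scM (\<rho> h))
   \<and> (\<forall>a b m. \<rho> (a + b) m = \<rho> a m + \<rho> b m)
   \<and> (\<forall>c a m. \<rho> (sc c a) m = scM c (\<rho> a m))
   \<and> \<rho> 1 = id
   \<and> (\<forall>h k m. sum_list (map (\<lambda>(a,b). \<rho> h (\<rho> a (\<rho> (S b) m))) (Delta k))
             = sum_list (map (\<lambda>(a,b). \<rho> (h * a) (\<rho> (S b) m)) (Delta k)))
   \<and> (\<forall>h k m. sum_list (map (\<lambda>(a,b). \<rho> a (\<rho> (S b) (\<rho> k m))) (Delta h))
             = sum_list (map (\<lambda>(a,b). \<rho> a (\<rho> (S b * k) m)) (Delta h)))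
   \<and> (\<forall>h k m. sum_list (map (\<lambda>(a,b). \<rho> h (\<rho> (S a) (\<rho> b m))) (Delta k))
             = sum_list (map (\<lambda>(a,b). \<rho> (h * S a) (\<rho> b m)) (Delta k)))
   \<and> (\<forall>h k m. sum_list (map (\<lambda>(a,b). \<rho> (S a) (\<rho> b (\<rho> k m))) (Delta h))
             = sum_list (map (\<lambda>(a,b). \<rho> (S a) (\<rho> (b * k) m)) (Delta h)))"

definition hom_act :: "'h::ring_1 \<Rightarrow> ('h \<Rightarrow> 'm) \<Rightarrow> ('h \<Rightarrow> 'm)" where
  "hom_act h f = (\<lambda>k. f (k * h))"

definition dil_phi :: "('h \<Rightarrow> 'm \<Rightarrow> 'm) \<Rightarrow> 'm \<Rightarrow> ('h \<Rightarrow> 'm)" where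
  "dil_phi \<rho> m = (\<lambda>h. \<rho> h m)"

inductive_set Mbar :: "('k::field \<Rightarrow> 'm::ab_group_add \<Rightarrow> 'm) \<Rightarrow> ('h::ring_1 \<Rightarrow> 'm \<Rightarrow> 'm) \<Rightarrow> ('h \<Rightarrow> 'm) set"
  for scM :: "'k::field \<Rightarrow> 'm::ab_group_add \<Rightarrow> 'm" and \<rho> :: "'h::ring_1 \<Rightarrow> 'm \<Rightarrow> 'm" where
  gen: "dil_phi \<rho> m \<in> Mbar scM \<rho>"
| zero: "(\<lambda>_. 0) \<in> Mbar scM \<rho>"
| add: "f \<in> Mbar scM \<rho> \<Longrightarrow> g \<in> Mbar scM \<rho> \<Longrightarrow> (\<lambda>k. f k + g k) \<in> Mbar scM \<rho>"
| scale: "f \<in> Mbar scM \<rho> \<Longrightarrow> (\<lambda>k. scM c (f k)) \<in> Mbar scM \<rho>"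
| act: "f \<in> Mbar scM \<rho> \<Longrightarrow> hom_act h f \<in> Mbar scM \<rho>"

definition T_pi :: "('h::ring_1 \<Rightarrow> 'm \<Rightarrow> 'm) \<Rightarrow> ('h \<Rightarrow> 'm) \<Rightarrow> ('h \<Rightarrow> 'm)" where
  "T_pi \<rho> f = dil_phi \<rho> (f 1)"

definition Mbar_morphism ::
  "('k::field \<Rightarrow> 'm::ab_group_add \<Rightarrow> 'm) \<Rightarrow> ('h::ring_1 \<Rightarrow> 'm \<Rightarrow> 'm) \<Rightarrow> (('h \<Rightarrow> 'm) \<Rightarrow> 'm) \<Rightarrow> bool" where
  "Mbar_morphism scM \<rho> psi \<longleftrightarrow>
     (\<forall>f\<in>Mbar scM \<rho>. \<forall>g\<in>Mbar scM \<rho>. psi (\<lambda>k. f k + g k) = psi f + psi g)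
   \<and> (\<forall>c. \<forall>f\<in>Mbar scM \<rho>. psi (\<lambda>k. scM c (f k)) = scM c (psi f))
   \<and> (\<forall>h. \<forall>f\<in>Mbar scM \<rho>. psi (hom_act h f) = \<rho> h (psi f))"

end

theory Submission
  imports Defs
begin

lemma Mbar_sub_range:
  assumes lin: "\<And>h. Vector_Spaces.linear scM scM (\<rho> h)"
    and G: "\<forall>a b. \<rho> (a * b) = \<rho> a \<circ> \<rho> b"
    and f: "f \<in> Mbar scM \<rho>"
  shows "\<exists>m. f = dil_phi \<rho> m"
  using f
proof (induction rule: Mbar.induct)
  case (gen m) then show ?case by blast
next
  case zero
  have "dil_phi \<rho> 0 = (\<lambda>_. 0)"
    using module_hom.zero[OF lin[unfolded linear_iff_module_hom]] by (auto simp: dil_phi_def)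
  then show ?case by metis
next
  case (add f g)
  then obtain m n where "f = dil_phi \<rho> m" "g = dil_phi \<rho> n" by blast
  then have "(\<lambda>k. f k + g k) = dil_phi \<rho> (m + n)"
    using module_hom.add[OF lin[unfolded linear_iff_module_hom]] by (auto simp: dil_phi_def)
  then show ?case by blast
next
  case (scale f c)
  then obtain m where "f = dil_phi \<rho> m" by blast
  then have "(\<lambda>k. scM c (f k)) = dil_phi \<rho> (scM c m)"
    using module_hom.scale[OF lin[unfolded linear_iff_module_hom]] by (auto simp: dil_phi_def)
  then show ?case by blast
next
  case (act f h)
  then obtain m where "f = dil_phi \<rho> m" by blast
  then have "hom_act h f = dil_phi \<rho> (\<rho> h m)"
    using G by (auto simp: dil_phi_def hom_act_def)
  then show ?case by blast
qed

lemma range_G: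
  assumes one: "\<rho> 1 = id"
    and sub: "\<forall>f\<in>Mbar scM \<rho>. \<exists>m. f = dil_phi \<rho> m"
  shows "\<forall>a b. \<rho> (a * b) = \<rho> a \<circ> \<rho> b"
proof (intro allI ext)
  fix a b m
  have "hom_act b (dil_phi \<rho> m) \<in> Mbar scM \<rho>" by (intro Mbar.act Mbar.gen)
  then obtain n where n: "hom_act b (dil_phi \<rho> m) = dil_phi \<rho> n" using sub by blast
  have "n = \<rho> b m" using fun_cong[OF n, of 1] one by (simp add: hom_act_def dil_phi_def)
  then show "\<rho> (a * b) m = (\<rho> a \<circ> \<rho> b) m"
    using fun_cong[OF n, of a] by (simp add: hom_act_def dil_phi_def)
qed

theorem mainTheorem12:
  fixes sc :: "'k::field \<Rightarrow> 'h::ring_1 \<Rightarrow> 'h"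
    and Delta :: "'h \<Rightarrow> ('h \<times> 'h) list"
    and eps :: "'h \<Rightarrow> 'k"
    and S :: "'h \<Rightarrow> 'h"
    and scM :: "'k \<Rightarrow> 'm::ab_group_add \<Rightarrow> 'm"
    and \<rho> :: "'h \<Rightarrow> 'm \<Rightarrow> 'm"
  assumes H: "hopf_algebra sc Delta eps S"
    and S_bij: "bij S"
    and M: "partial_module sc Delta S scM \<rho>"
  shows "((\<forall>a b. \<rho> (a * b) = \<rho> a \<circ> \<rho> b)
            \<longleftrightarrow> (\<exists>psi. Mbar_morphism scM \<rho> psi \<and> (\<forall>f\<in>Mbar scM \<rho>. dil_phi \<rho> (psi f) = f)))
       \<and> ((\<forall>a b. \<rho> (a * b) = \<rho> a \<circ> \<rho> b) \<longleftrightarrow> bij_betw (dil_phi \<rho>) UNIV (Mbar scM \<rho>))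
       \<and> ((\<forall>a b. \<rho> (a * b) = \<rho> a \<circ> \<rho> b) \<longrightarrow>
            (bij_betw (dil_phi \<rho>) UNIV (Mbar scM \<rho>)
             \<and> (\<forall>m n. dil_phi \<rho> (m + n) = (\<lambda>k. dil_phi \<rho> m k + dil_phi \<rho> n k))
             \<and> (\<forall>c m. dil_phi \<rho> (scM c m) = (\<lambda>k. scM c (dil_phi \<rho> m k)))
             \<and> (\<forall>h m. dil_phi \<rho> (\<rho> h m) = hom_act h (dil_phi \<rho> m))
             \<and> (\<forall>f\<in>Mbar scM \<rho>. T_pi \<rho> f = f)))"
proof -
  have lin: "\<And>h. Vector_Spaces.linear scM scM (\<rho> h)" and one: "\<rho> 1 = id"
    using M by (auto simp: partial_module_def)
  have addm: "\<And>h m n. \<rho> h (m + n) = \<rho> h m + \<rho> h n"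
    by (rule module_hom.add[OF lin[unfolded linear_iff_module_hom]])
  have scm: "\<And>h c m. \<rho> h (scM c m) = scM c (\<rho> h m)"
    by (rule module_hom.scale[OF lin[unfolded linear_iff_module_hom]])
  have inj: "inj (dil_phi \<rho>)"
  proof (rule injI)
    fix x y assume "dil_phi \<rho> x = dil_phi \<rho> y"
    from fun_cong[OF this, of 1] show "x = y" using one by (simp add: dil_phi_def)
  qed
  have at1: "\<And>m. dil_phi \<rho> m 1 = m" using one by (simp add: dil_phi_def)
  let ?G = "\<forall>a b. \<rho> (a * b) = \<rho> a \<circ> \<rho> b"
  have GB: "?G \<Longrightarrow> bij_betw (dil_phi \<rho>) UNIV (Mbar scM \<rho>)"
  proof -
    assume G: ?G
    have "dil_phi \<rho> ` UNIV = Mbar scM \<rho>"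
      using Mbar_sub_range[OF lin G] by (auto intro: Mbar.gen)
    then show ?thesis using inj by (simp add: bij_betw_def)
  qed
  have BG: "bij_betw (dil_phi \<rho>) UNIV (Mbar scM \<rho>) \<Longrightarrow> ?G"
    by (rule range_G[where scM=scM and \<rho>=\<rho>, OF one]) (auto simp: bij_betw_def)
  have GP: "?G \<Longrightarrow> \<exists>psi. Mbar_morphism scM \<rho> psi \<and> (\<forall>f\<in>Mbar scM \<rho>. dil_phi \<rho> (psi f) = f)"
  proof -
    assume G: ?G
    have R: "\<And>f. f \<in> Mbar scM \<rho> \<Longrightarrow> \<exists>m. f = dil_phi \<rho> m" using Mbar_sub_range[OF lin G] by blast
    have "Mbar_morphism scM \<rho> (\<lambda>f. f 1)"
      unfolding Mbar_morphism_def
    proof (intro conjI ballI allI)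
      fix h f assume "f \<in> Mbar scM \<rho>"
      then obtain m where "f = dil_phi \<rho> m" using R by blast
      then show "hom_act h f 1 = \<rho> h (f 1)" using one by (simp add: hom_act_def dil_phi_def)
    qed auto
    moreover have "\<forall>f\<in>Mbar scM \<rho>. dil_phi \<rho> (f 1) = f" using R at1 by metis
    ultimately show ?thesis by blast
  qed
  have PG: "(\<exists>psi. Mbar_morphism scM \<rho> psi \<and> (\<forall>f\<in>Mbar scM \<rho>. dil_phi \<rho> (psi f) = f)) \<Longrightarrow> ?G"
    by (rule range_G[where scM=scM and \<rho>=\<rho>, OF one]) metis
  have rest: "?G \<Longrightarrow> (\<forall>h m. dil_phi \<rho> (\<rho> h m) = hom_act h (dil_phi \<rho> m))
             \<and> (\<forall>f\<in>Mbar scM \<rho>. T_pi \<rho> f = f)"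
  proof -
    assume G: ?G
    show ?thesis
    proof (intro conjI allI ballI)
      fix h m show "dil_phi \<rho> (\<rho> h m) = hom_act h (dil_phi \<rho> m)"
        using G by (auto simp: dil_phi_def hom_act_def)
    next
      fix f assume "f \<in> Mbar scM \<rho>"
      then obtain m where "f = dil_phi \<rho> m" using Mbar_sub_range[OF lin G] by blast
      then show "T_pi \<rho> f = f" using at1 by (simp add: T_pi_def)
    qed
  qed
  have "\<forall>m n. dil_phi \<rho> (m + n) = (\<lambda>k. dil_phi \<rho> m k + dil_phi \<rho> n k)"
    by (simp add: dil_phi_def addm)
  moreover have "\<forall>c m. dil_phi \<rho> (scM c m) = (\<lambda>k. scM c (dil_phi \<rho> m k))"
    by (simp add: dil_phi_def scm)
  ultimately show ?thesis using GB BG GP PG rest by blast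
qed

end
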